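(* Let $\phi$ be a quantum channel on $\mathcal M(d;\mathbb C)$, and let $\mathcal G_\phi$ be the (nonempty) set of limit points of the sequence $(\phi^n)_{n\in\mathbb N}$. Then either every element of $\mathcal G_\phi$ is entanglement-breaking, or no element of $\mathcal G_\phi$ is entanglement-breaking.
   Context: A quantum channel is a completely positive, trace-preserving linear map on $\mathcal M(d;\mathbb C)$; $\phi^n$ is its $n$-fold composition. A channel $\psi$ is entanglement-breaking if $(\psi\otimes I)(\rho)$ is separable for every bipartite state $\rho$. *)

theory Defs
  imports Complex_Main "Jordan_Normal_Form.Matrix"
begin

text \<open>Complex d x d matrices are elements of carrier_mat d d (type complex mat).
Composite index convention for C^d (x) C^m: (i,a) corresponds to i*m + a.\<close>

definition mtrace :: "complex mat \<Rightarrow> complex" where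
  "mtrace A = (\<Sum>i<dim_row A. A $$ (i,i))"

definition psd :: "nat \<Rightarrow> complex mat \<Rightarrow> bool" where
  "psd n A \<longleftrightarrow> A \<in> carrier_mat n n \<and>
     (\<forall>v \<in> carrier_vec n. let q = (\<Sum>i<n. cnj (v $ i) * (A *\<^sub>v v) $ i) in Im q = 0 \<and> Re q \<ge> 0)"

definition is_state :: "nat \<Rightarrow> complex mat \<Rightarrow> bool" where
  "is_state n A \<longleftrightarrow> psd n A \<and> mtrace A = 1"

definition blk :: "nat \<Rightarrow> nat \<Rightarrow> complex mat \<Rightarrow> nat \<Rightarrow> nat \<Rightarrow> complex mat" where
  "blk d m \<rho> a b = mat d d (\<lambda>(i,j). \<rho> $$ (i*m + a, j*m + b))"

definition tensor_id :: "nat \<Rightarrow> nat \<Rightarrow> (complex mat \<Rightarrow> complex mat) \<Rightarrow> complex mat \<Rightarrow> complex mat" where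
  "tensor_id d m \<psi> \<rho> = mat (d*m) (d*m)
     (\<lambda>(p,q). \<psi> (blk d m \<rho> (p mod m) (q mod m)) $$ (p div m, q div m))"

definition linear_on_mat :: "nat \<Rightarrow> (complex mat \<Rightarrow> complex mat) \<Rightarrow> bool" where
  "linear_on_mat d \<psi> \<longleftrightarrow>
     (\<forall>A \<in> carrier_mat d d. \<psi> A \<in> carrier_mat d d) \<and>
     (\<forall>A \<in> carrier_mat d d. \<forall>B \<in> carrier_mat d d. \<psi> (A + B) = \<psi> A + \<psi> B) \<and>
     (\<forall>A \<in> carrier_mat d d. \<forall>c. \<psi> (c \<cdot>\<^sub>m A) = c \<cdot>\<^sub>m \<psi> A)"

definition completely_positive :: "nat \<Rightarrow> (complex mat \<Rightarrow> complex mat) \<Rightarrow> bool" where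
  "completely_positive d \<psi> \<longleftrightarrow>
     (\<forall>m. \<forall>\<rho>. psd (d*m) \<rho> \<longrightarrow> psd (d*m) (tensor_id d m \<psi> \<rho>))"

definition trace_preserving :: "nat \<Rightarrow> (complex mat \<Rightarrow> complex mat) \<Rightarrow> bool" where
  "trace_preserving d \<psi> \<longleftrightarrow> (\<forall>A \<in> carrier_mat d d. mtrace (\<psi> A) = mtrace A)"

definition quantum_channel :: "nat \<Rightarrow> (complex mat \<Rightarrow> complex mat) \<Rightarrow> bool" where
  "quantum_channel d \<psi> \<longleftrightarrow> linear_on_mat d \<psi> \<and> completely_positive d \<psi> \<and> trace_preserving d \<psi>"

definition separable :: "nat \<Rightarrow> nat \<Rightarrow> complex mat \<Rightarrow> bool" where
  "separable d m \<sigma> \<longleftrightarrow> \<sigma> \<in> carrier_mat (d*m) (d*m) \<and>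
     (\<exists>K (p :: nat \<Rightarrow> real) A B.
        (\<forall>k<K. p k \<ge> 0 \<and> is_state d (A k) \<and> is_state m (B k)) \<and>
        (\<Sum>k<K. p k) = 1 \<and>
        (\<forall>i<d*m. \<forall>j<d*m. \<sigma> $$ (i,j) =
            (\<Sum>k<K. complex_of_real (p k) * (A k $$ (i div m, j div m)) * (B k $$ (i mod m, j mod m)))))"

definition entanglement_breaking :: "nat \<Rightarrow> (complex mat \<Rightarrow> complex mat) \<Rightarrow> bool" where
  "entanglement_breaking d \<psi> \<longleftrightarrow>
     (\<forall>m. \<forall>\<rho>. is_state (d*m) \<rho> \<longrightarrow> separable d m (tensor_id d m \<psi> \<rho>))"

text \<open>psi is a limit point (subsequential limit) of (phi^n)_n, in the (entrywise, equivalently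
any norm) topology on linear maps of M(d;C).\<close>
definition limit_point_of_powers :: "nat \<Rightarrow> (complex mat \<Rightarrow> complex mat) \<Rightarrow> (complex mat \<Rightarrow> complex mat) \<Rightarrow> bool" where
  "limit_point_of_powers d \<phi> \<psi> \<longleftrightarrow>
     (\<forall>A \<in> carrier_mat d d. \<psi> A \<in> carrier_mat d d) \<and>
     (\<exists>r. strict_mono r \<and>
        (\<forall>A \<in> carrier_mat d d. \<forall>i<d. \<forall>j<d.
           (\<lambda>k. ((\<phi> ^^ r k) A) $$ (i,j)) \<longlonglongrightarrow> \<psi> A $$ (i,j)))"

end

theory Submission
  imports Defs "HOL-Analysis.Elementary_Metric_Spaces"
begin

definition qf :: "nat \<Rightarrow> complex mat \<Rightarrow> complex vec \<Rightarrow> complex" where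
  "qf n A v = (\<Sum>i<n. cnj (v $ i) * (A *\<^sub>v v) $ i)"

lemma psd_iff: "psd n A \<longleftrightarrow> A \<in> carrier_mat n n \<and> (\<forall>v\<in>carrier_vec n. Im (qf n A v) = 0 \<and> Re (qf n A v) \<ge> 0)"
  unfolding psd_def qf_def Let_def by simp

lemma qf_expand:
  assumes "A \<in> carrier_mat n n"
  shows "qf n A (vec n x) = (\<Sum>k<n. \<Sum>l<n. cnj (x k) * A $$ (k,l) * x l)"
  unfolding qf_def using assms
  by (auto simp: scalar_prod_def sum_distrib_left mult.assoc atLeast0LessThan intro!: sum.cong)

definition pos :: "nat \<Rightarrow> (complex mat \<Rightarrow> complex mat) \<Rightarrow> bool" where
  "pos d \<psi> \<longleftrightarrow> (\<forall>A. psd d A \<longrightarrow> psd d (\<psi> A))"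

lemma psd_carrier: "psd n A \<Longrightarrow> A \<in> carrier_mat n n" unfolding psd_def by auto

lemma tensor1: assumes "\<forall>A \<in> carrier_mat d d. \<psi> A \<in> carrier_mat d d" "A \<in> carrier_mat d d"
  shows "tensor_id d 1 \<psi> A = \<psi> A"
proof -
  have b: "blk d 1 A 0 0 = A" using assms(2) by (intro eq_matI) (auto simp: blk_def)
  show ?thesis using assms b by (intro eq_matI) (auto simp: tensor_id_def)
qed

lemma channel_pos: assumes "quantum_channel d \<phi>" shows "pos d \<phi>"
  unfolding pos_def
proof (intro allI impI)
  fix A assume A: "psd d A"
  have c: "\<forall>A \<in> carrier_mat d d. \<phi> A \<in> carrier_mat d d" using assms
    unfolding quantum_channel_def linear_on_mat_def by auto
  have "psd (d*1) (tensor_id d 1 \<phi> A)" using assms A unfolding quantum_channel_def completely_positive_def by (metis mult_1_right)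
  then show "psd d (\<phi> A)" using tensor1[OF c psd_carrier[OF A]] by simp
qed

lemma pow_props:
  assumes "linear_on_mat d \<phi>" "pos d \<phi>" "trace_preserving d \<phi>"
  shows "linear_on_mat d (\<phi>^^n) \<and> pos d (\<phi>^^n) \<and> trace_preserving d (\<phi>^^n)"
proof (induction n)
  case 0
  then show ?case by (auto simp: linear_on_mat_def pos_def trace_preserving_def)
next
  case (Suc n)
  have L: "linear_on_mat d (\<phi>^^n)" and P: "pos d (\<phi>^^n)" and T: "trace_preserving d (\<phi>^^n)" using Suc by auto
  have l1: "linear_on_mat d (\<phi> ^^ Suc n)"
    using L assms(1) unfolding linear_on_mat_def by (auto simp: smult_carrier_mat)
  have p1: "pos d (\<phi> ^^ Suc n)" using P assms(2) unfolding pos_def by auto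
  have t1: "trace_preserving d (\<phi> ^^ Suc n)" using T L assms(3) unfolding trace_preserving_def linear_on_mat_def by auto
  show ?case using l1 p1 t1 by blast
qed

lemma lin_sum:
  assumes lin: "linear_on_mat d \<psi>" and fin: "finite S" and M: "\<forall>x\<in>S. M x \<in> carrier_mat d d"
    and ij: "i < d" "j < d"
  shows "\<psi> (mat d d (\<lambda>p. \<Sum>x\<in>S. c x * M x $$ p)) $$ (i,j) = (\<Sum>x\<in>S. c x * \<psi> (M x) $$ (i,j))"
  using fin M
proof (induction S rule: finite_induct)
  case empty
  have "mat d d (\<lambda>p. \<Sum>x\<in>{}. c x * M x $$ p) = 0 \<cdot>\<^sub>m (0\<^sub>m d d)"
    by (rule eq_matI) auto
  then have h1: "\<psi> (mat d d (\<lambda>p. \<Sum>x\<in>{}. c x * M x $$ p)) = 0 \<cdot>\<^sub>m \<psi> (0\<^sub>m d d)"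
    using lin unfolding linear_on_mat_def by (metis zero_carrier_mat)
  moreover have h2: "\<psi> (0\<^sub>m d d) \<in> carrier_mat d d" using lin unfolding linear_on_mat_def by auto
  show ?case by (simp only: h1) (use h2 ij in simp)
next
  case (insert x S)
  have eq: "mat d d (\<lambda>p. \<Sum>y\<in>insert x S. c y * M y $$ p) = c x \<cdot>\<^sub>m M x + mat d d (\<lambda>p. \<Sum>y\<in>S. c y * M y $$ p)"
    using insert by (intro eq_matI) auto
  have Mx: "M x \<in> carrier_mat d d" using insert by auto
  have l1: "\<psi> (c x \<cdot>\<^sub>m M x + mat d d (\<lambda>p. \<Sum>y\<in>S. c y * M y $$ p)) = \<psi> (c x \<cdot>\<^sub>m M x) + \<psi> (mat d d (\<lambda>p. \<Sum>y\<in>S. c y * M y $$ p))"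
    using lin Mx unfolding linear_on_mat_def by auto
  have l2: "\<psi> (c x \<cdot>\<^sub>m M x) = c x \<cdot>\<^sub>m \<psi> (M x)" using lin Mx unfolding linear_on_mat_def by auto
  have c1: "\<psi> (M x) \<in> carrier_mat d d" using lin Mx unfolding linear_on_mat_def by auto
  have c2: "\<psi> (mat d d (\<lambda>p. \<Sum>y\<in>S. c y * M y $$ p)) \<in> carrier_mat d d" using lin unfolding linear_on_mat_def by auto
  show ?case unfolding eq l1 l2 using c1 c2 ij insert by auto
qed

definition E :: "nat \<Rightarrow> nat \<Rightarrow> nat \<Rightarrow> complex mat" where
  "E d a b = mat d d (\<lambda>(k,l). if k = a \<and> l = b then 1 else 0)"

lemma decomp:
  assumes lin: "linear_on_mat d \<psi>" and A: "A \<in> carrier_mat d d" and ij: "i < d" "j < d"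
  shows "\<psi> A $$ (i,j) = (\<Sum>x\<in>{..<d}\<times>{..<d}. A $$ x * \<psi> (E d (fst x) (snd x)) $$ (i,j))"
proof -
  have eq: "A = mat d d (\<lambda>p. \<Sum>x\<in>{..<d}\<times>{..<d}. A $$ x * E d (fst x) (snd x) $$ p)"
  proof (rule eq_matI)
    fix k l assume kl: "k < dim_row (mat d d (\<lambda>p. \<Sum>x\<in>{..<d}\<times>{..<d}. A $$ x * E d (fst x) (snd x) $$ p))"
       "l < dim_col (mat d d (\<lambda>p. \<Sum>x\<in>{..<d}\<times>{..<d}. A $$ x * E d (fst x) (snd x) $$ p))"
    then have kl': "k < d" "l < d" by auto
    have "(\<Sum>x\<in>{..<d}\<times>{..<d}. A $$ x * E d (fst x) (snd x) $$ (k,l))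
        = (\<Sum>x\<in>{..<d}\<times>{..<d}. if x = (k,l) then A $$ (k,l) else 0)"
      using kl' by (intro sum.cong) (auto simp: E_def)
    also have "\<dots> = A $$ (k,l)" using kl' by (simp add: sum.delta')
    finally show "A $$ (k,l) = mat d d (\<lambda>p. \<Sum>x\<in>{..<d}\<times>{..<d}. A $$ x * E d (fst x) (snd x) $$ p) $$ (k,l)"
      using kl' by simp
  qed (use A in auto)
  have "\<psi> A $$ (i,j) = \<psi> (mat d d (\<lambda>p. \<Sum>x\<in>{..<d}\<times>{..<d}. A $$ x * E d (fst x) (snd x) $$ p)) $$ (i,j)"
    using eq by simp
  also have "\<dots> = (\<Sum>x\<in>{..<d}\<times>{..<d}. A $$ x * \<psi> (E d (fst x) (snd x)) $$ (i,j))"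
    by (rule lin_sum[OF lin _ _ ij]) (auto simp: E_def)
  finally show ?thesis .
qed

lemma qf_expand_v:
  assumes "A \<in> carrier_mat n n" "v \<in> carrier_vec n"
  shows "qf n A v = (\<Sum>k<n. \<Sum>l<n. cnj (v $ k) * A $$ (k,l) * v $ l)"
  unfolding qf_def using assms
  by (auto simp: scalar_prod_def sum_distrib_left mult.assoc atLeast0LessThan intro!: sum.cong)

lemma inner_two:
  fixes f :: "nat \<Rightarrow> complex"
  assumes "i < n" "j < n" "i \<noteq> j"
  shows "(\<Sum>l<n. f l * ((if l = i then 1 else 0) + (if l = j then c else 0))) = f i + c * f j"
proof -
  have "(\<Sum>l<n. f l * ((if l = i then 1 else 0) + (if l = j then c else 0)))
      = (\<Sum>l<n. (if l = i then f i else 0) + (if l = j then c * f j else 0))"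
    by (intro sum.cong) (use assms in auto)
  also have "\<dots> = f i + c * f j" using assms by (simp add: sum.distrib)
  finally show ?thesis .
qed

lemma psd_diag:
  assumes "psd n Y" "k < n"
  shows "Im (Y $$ (k,k)) = 0 \<and> Re (Y $$ (k,k)) \<ge> 0"
proof -
  define v where "v = vec n (\<lambda>l. if l = k then 1 else (0::complex))"
  have v: "v \<in> carrier_vec n" unfolding v_def by simp
  have Y: "Y \<in> carrier_mat n n" using assms psd_carrier by auto
  have "qf n Y v = (\<Sum>a<n. \<Sum>b<n. cnj (v $ a) * Y $$ (a,b) * v $ b)" by (rule qf_expand_v[OF Y v])
  also have "\<dots> = (\<Sum>a<n. if a = k then Y $$ (k,k) else 0)"
  proof (intro sum.cong refl)
    fix a assume a: "a \<in> {..<n}"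
    have "(\<Sum>b<n. cnj (v $ a) * Y $$ (a,b) * v $ b) = (\<Sum>b<n. if b = k then cnj (v $ a) * Y $$ (a,k) else 0)"
      unfolding v_def by (intro sum.cong) auto
    also have "\<dots> = cnj (v $ a) * Y $$ (a,k)" using assms(2) by simp
    finally show "(\<Sum>b<n. cnj (v $ a) * Y $$ (a,b) * v $ b) = (if a = k then Y $$ (k,k) else 0)"
      using a unfolding v_def by auto
  qed
  also have "\<dots> = Y $$ (k,k)" using assms(2) by simp
  finally show ?thesis using assms v unfolding psd_iff by metis
qed

lemma qf_two:
  assumes Y: "Y \<in> carrier_mat n n" and ij: "i < n" "j < n" "i \<noteq> j"
  shows "qf n Y (vec n (\<lambda>l. (if l = i then 1 else 0) + (if l = j then c else 0)))
     = Y $$ (i,i) + c * Y $$ (i,j) + cnj c * Y $$ (j,i) + cnj c * c * Y $$ (j,j)"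
proof -
  let ?x = "\<lambda>l. (if l = i then 1 else 0) + (if l = j then c else (0::complex))"
  have "qf n Y (vec n ?x) = (\<Sum>k<n. \<Sum>l<n. cnj (?x k) * Y $$ (k,l) * ?x l)"
    unfolding qf_expand_v[OF Y vec_carrier] by (intro sum.cong refl) auto
  also have "\<dots> = (\<Sum>k<n. cnj (?x k) * (Y $$ (k,i) + c * Y $$ (k,j)))"
  proof (intro sum.cong refl)
    fix k assume "k \<in> {..<n}"
    have "(\<Sum>l<n. cnj (?x k) * Y $$ (k,l) * ?x l) = cnj (?x k) * (\<Sum>l<n. Y $$ (k,l) * ?x l)"
      by (simp add: sum_distrib_left mult.assoc)
    also have "(\<Sum>l<n. Y $$ (k,l) * ?x l) = Y $$ (k,i) + c * Y $$ (k,j)"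
      by (rule inner_two[OF ij])
    finally show "(\<Sum>l<n. cnj (?x k) * Y $$ (k,l) * ?x l) = cnj (?x k) * (Y $$ (k,i) + c * Y $$ (k,j))" .
  qed
  also have "\<dots> = (\<Sum>k<n. (Y $$ (k,i) + c * Y $$ (k,j)) * ((if k = i then 1 else 0) + (if k = j then cnj c else 0)))"
    by (intro sum.cong) auto
  also have "\<dots> = (Y $$ (i,i) + c * Y $$ (i,j)) + cnj c * (Y $$ (j,i) + c * Y $$ (j,j))"
    by (rule inner_two[OF ij])
  finally show ?thesis by (simp add: algebra_simps)
qed

lemma psd_off:
  assumes P: "psd n Y" and ij: "i < n" "j < n" "i \<noteq> j"
  shows "cmod (Y $$ (i,j)) \<le> Re (Y $$ (i,i)) + Re (Y $$ (j,j))"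
proof -
  have Y: "Y \<in> carrier_mat n n" using P psd_carrier by auto
  have qv: "Im (qf n Y v) = 0 \<and> Re (qf n Y v) \<ge> 0" if "v \<in> carrier_vec n" for v
    using P that unfolding psd_iff by blast
  have q: "Im (Y $$ (i,i) + c * Y $$ (i,j) + cnj c * Y $$ (j,i) + cnj c * c * Y $$ (j,j)) = 0 \<and>
           Re (Y $$ (i,i) + c * Y $$ (i,j) + cnj c * Y $$ (j,i) + cnj c * c * Y $$ (j,j)) \<ge> 0" for c
    using qv[OF vec_carrier, of "\<lambda>l. (if l = i then 1 else 0) + (if l = j then c else 0)"]
    unfolding qf_two[OF Y ij] .
  have di: "Im (Y $$ (i,i)) = 0" "Re (Y $$ (i,i)) \<ge> 0" using psd_diag[OF P ij(1)] by auto
  have dj: "Im (Y $$ (j,j)) = 0" "Re (Y $$ (j,j)) \<ge> 0" using psd_diag[OF P ij(2)] by auto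
  have q1: "Im (Y $$ (i,j)) + Im (Y $$ (j,i)) = 0" "Re (Y $$ (i,i)) + Re (Y $$ (j,j)) + Re (Y $$ (i,j)) + Re (Y $$ (j,i)) \<ge> 0"
    using q[of 1] di dj by simp_all
  have q2: "Re (Y $$ (i,i)) + Re (Y $$ (j,j)) - Re (Y $$ (i,j)) - Re (Y $$ (j,i)) \<ge> 0"
    using q[of "-1"] di dj by simp
  have q3: "Re (Y $$ (i,j)) - Re (Y $$ (j,i)) = 0" "Re (Y $$ (i,i)) + Re (Y $$ (j,j)) - Im (Y $$ (i,j)) + Im (Y $$ (j,i)) \<ge> 0"
    using q[of "\<i>"] di dj by simp_all
  have q4: "Re (Y $$ (i,i)) + Re (Y $$ (j,j)) + Im (Y $$ (i,j)) - Im (Y $$ (j,i)) \<ge> 0"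
    using q[of "-\<i>"] di dj by simp
  have "cmod (Y $$ (i,j)) \<le> \<bar>Re (Y $$ (i,j))\<bar> + \<bar>Im (Y $$ (i,j))\<bar>" by (rule cmod_le)
  then show ?thesis using q1 q2 q3 q4 by linarith
qed

lemma psd_bound:
  assumes P: "psd n Y" and ij: "i < n" "j < n"
  shows "cmod (Y $$ (i,j)) \<le> Re (mtrace Y)"
proof -
  have Y: "Y \<in> carrier_mat n n" using P psd_carrier by auto
  have tr: "Re (mtrace Y) = (\<Sum>k<n. Re (Y $$ (k,k)))" using Y unfolding mtrace_def by (simp add: Re_sum)
  have nn: "\<forall>k\<in>{..<n}. 0 \<le> Re (Y $$ (k,k))" using psd_diag[OF P] by auto
  show ?thesis
  proof (cases "i = j")
    case True
    have "cmod (Y $$ (i,i)) = Re (Y $$ (i,i))" using psd_diag[OF P ij(1)]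
      by (simp add: cmod_eq_Re)
    also have "\<dots> \<le> (\<Sum>k<n. Re (Y $$ (k,k)))" using ij nn by (intro member_le_sum) auto
    finally show ?thesis using tr True by simp
  next
    case False
    have "cmod (Y $$ (i,j)) \<le> Re (Y $$ (i,i)) + Re (Y $$ (j,j))" by (rule psd_off[OF P ij False])
    also have "\<dots> = (\<Sum>k\<in>{i,j}. Re (Y $$ (k,k)))" using False by simp
    also have "\<dots> \<le> (\<Sum>k<n. Re (Y $$ (k,k)))" using ij nn by (intro sum_mono2) auto
    finally show ?thesis using tr by simp
  qed
qed

definition R :: "nat \<Rightarrow> (nat \<Rightarrow> complex) \<Rightarrow> complex mat" where
  "R n x = mat n n (\<lambda>(k,l). x k * cnj (x l))"

lemma R_psd: "psd n (R n x)"
  unfolding psd_iff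
proof (rule conjI, simp add: R_def, rule ballI)
  fix v :: "complex Matrix.vec" assume v: "v \<in> carrier_vec n"
  define z where "z = (\<Sum>l<n. cnj (x l) * v $ l)"
  have "qf n (R n x) v = (\<Sum>k<n. \<Sum>l<n. cnj (v $ k) * R n x $$ (k,l) * v $ l)"
    by (rule qf_expand_v) (use v in \<open>auto simp: R_def\<close>)
  also have "\<dots> = (\<Sum>k<n. \<Sum>l<n. (cnj (v $ k) * x k) * (cnj (x l) * v $ l))"
    by (intro sum.cong refl) (auto simp: R_def algebra_simps)
  also have "\<dots> = (\<Sum>k<n. cnj (v $ k) * x k) * z"
    unfolding z_def by (simp add: sum_product)
  finally have qq: "qf n (R n x) v = (\<Sum>k<n. cnj (v $ k) * x k) * z" .
  have "(\<Sum>k<n. cnj (v $ k) * x k) = cnj z" unfolding z_def by (simp add: mult.commute)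
  with qq have "qf n (R n x) v = z * cnj z" by (simp add: mult.commute)
  then have "qf n (R n x) v = complex_of_real ((Re z)\<^sup>2 + (Im z)\<^sup>2)" by (simp add: complex_mult_cnj)
  then show "Im (qf n (R n x) v) = 0 \<and> 0 \<le> Re (qf n (R n x) v)" by simp
qed

lemma R_trace: "mtrace (R n x) = (\<Sum>k<n. x k * cnj (x k))"
  unfolding mtrace_def R_def by simp

definition del :: "nat \<Rightarrow> nat \<Rightarrow> complex" where "del a k = (if k = a then 1 else 0)"

lemma trace_del: "a < n \<Longrightarrow> mtrace (R n (del a)) = 1"
  unfolding R_trace del_def by (simp add: if_distrib cong: if_cong)

lemma trace_two: assumes "a < n" "b < n" "a \<noteq> b" "cmod c = 1"
  shows "mtrace (R n (\<lambda>k. del a k + c * del b k)) = 2"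
proof -
  have "mtrace (R n (\<lambda>k. del a k + c * del b k)) = (\<Sum>k<n. (if k = a then 1 else 0) + (if k = b then c * cnj c else 0))"
    unfolding R_trace del_def using assms by (intro sum.cong) auto
  also have "\<dots> = 1 + c * cnj c" using assms by (simp add: sum.distrib)
  also have "c * cnj c = 1" using assms(4) by (simp add: complex_mult_cnj cmod_def)
  finally show ?thesis by simp
qed

lemma map_bound:
  assumes "pos d \<psi>" "trace_preserving d \<psi>" "psd d X" "i < d" "j < d"
  shows "cmod (\<psi> X $$ (i,j)) \<le> Re (mtrace X)"
proof -
  have "psd d (\<psi> X)" using assms unfolding pos_def by auto
  then have "cmod (\<psi> X $$ (i,j)) \<le> Re (mtrace (\<psi> X))" using assms psd_bound by auto
  also have "mtrace (\<psi> X) = mtrace X" using assms psd_carrier unfolding trace_preserving_def by auto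
  finally show ?thesis .
qed

lemma E_bound:
  assumes L: "linear_on_mat d \<psi>" and P: "pos d \<psi>" and T: "trace_preserving d \<psi>"
    and ab: "a < d" "b < d" and ij: "i < d" "j < d"
  shows "cmod (\<psi> (E d a b) $$ (i,j)) \<le> 8"
proof (cases "a = b")
  case True
  have "E d a b = R d (del a)" using True by (intro eq_matI) (auto simp: E_def R_def del_def)
  then have "cmod (\<psi> (E d a b) $$ (i,j)) \<le> Re (mtrace (R d (del a)))"
    using map_bound[OF P T R_psd ij] by simp
  also have "\<dots> = 1" using trace_del[OF ab(1)] by simp
  finally show ?thesis by simp
next
  case False
  define M where "M t = (if t = (0::nat) then R d (\<lambda>k. del a k + 1 * del b k)
     else if t = 1 then R d (\<lambda>k. del a k + \<i> * del b k) else if t = 2 then R d (del a) else R d (del b))" for t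
  define c where "c t = (if t = (0::nat) then 1/2 else if t = 1 then \<i>/2 else -(1+\<i>)/2)" for t
  have Mt: "psd d (M t) \<and> Re (mtrace (M t)) \<le> 2" for t
    unfolding M_def using trace_two[OF ab False, of 1] trace_two[OF ab False, of \<i>] trace_del[OF ab(1)] trace_del[OF ab(2)]
    by (auto simp: R_psd)
  have ct: "cmod (c t) \<le> 1" for t
  proof -
    have "cmod (1 + \<i>) \<le> cmod 1 + cmod \<i>" by (rule norm_triangle_ineq)
    then have "cmod (1 + \<i>) \<le> 2" by simp
    moreover have "- 1 - \<i> = - (1 + \<i>)" by simp
    then have "cmod (- 1 - \<i>) = cmod (1 + \<i>)" by (simp only: norm_minus_cancel)
    ultimately have "cmod (- 1 - \<i>) \<le> 2" by simp
    then show ?thesis unfolding c_def by (auto simp: norm_divide norm_minus_cancel)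
  qed
  have Eeq: "E d a b = mat d d (\<lambda>p. \<Sum>t\<in>{0,1,2,3}. c t * M t $$ p)"
  proof (rule eq_matI)
    fix k l assume "k < dim_row (mat d d (\<lambda>p. \<Sum>t\<in>{0,1,2,3}. c t * M t $$ p))"
      "l < dim_col (mat d d (\<lambda>p. \<Sum>t\<in>{0,1,2,3}. c t * M t $$ p))"
    then have kl: "k < d" "l < d" by auto
    show "E d a b $$ (k,l) = mat d d (\<lambda>p. \<Sum>t\<in>{0,1,2,3}. c t * M t $$ p) $$ (k,l)"
      using kl False by (auto simp: E_def M_def c_def R_def del_def field_simps)
  qed (auto simp: E_def)
  have hE: "\<psi> (E d a b) $$ (i,j) = (\<Sum>t\<in>{0,1,2,3}. c t * \<psi> (M t) $$ (i,j))"
    unfolding Eeq by (rule lin_sum[OF L _ _ ij]) (use Mt psd_carrier in auto)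
  have "cmod (\<psi> (E d a b) $$ (i,j)) \<le> (\<Sum>t\<in>{0,1,2,3::nat}. cmod (c t * \<psi> (M t) $$ (i,j)))"
    unfolding hE by (rule norm_sum)
  also have "\<dots> \<le> (\<Sum>t\<in>{0,1,2,3::nat}. 2)"
  proof (rule sum_mono)
    fix t :: nat
    have "cmod (\<psi> (M t) $$ (i,j)) \<le> 2" using map_bound[OF P T _ ij, of "M t"] Mt[of t] by auto
    then show "cmod (c t * \<psi> (M t) $$ (i,j)) \<le> 2" using ct[of t]
      by (simp add: norm_mult) (metis mult_mono norm_ge_zero mult_1_left order_trans)
  qed
  also have "\<dots> = 8" by simp
  finally show ?thesis .
qed

lemma multi_bw_real:
  fixes f :: "'i \<Rightarrow> nat \<Rightarrow> real"
  assumes "finite S" "\<forall>x\<in>S. \<exists>B. \<forall>n. norm (f x n) \<le> B"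
  shows "\<exists>h. strict_mono h \<and> (\<forall>x\<in>S. convergent (\<lambda>k. f x (h k)))"
  using assms
proof (induction S rule: finite_induct)
  case empty
  show ?case by (rule exI[of _ id]) (simp add: strict_mono_def)
next
  case (insert x S)
  then obtain h where h: "strict_mono h" "\<forall>y\<in>S. convergent (\<lambda>k. f y (h k))" by auto
  obtain B where B: "\<forall>n. norm (f x n) \<le> B" using insert by auto
  have "bounded (range (\<lambda>k. f x (h k)))" unfolding bounded_iff
  proof (rule exI[of _ B], rule ballI)
    fix z assume "z \<in> range (\<lambda>k. f x (h k))"
    then obtain k where "z = f x (h k)" by blast
    then show "norm z \<le> B" using B[rule_format, of "h k"] by simp
  qed
  from bounded_imp_convergent_subsequence[OF this] obtain l r where r: "strict_mono r" "((\<lambda>k. f x (h k)) \<circ> r) \<longlonglongrightarrow> l"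
    by (elim exE conjE)
  have "strict_mono (h \<circ> r)" using h r by (simp add: strict_mono_o)
  moreover have "convergent (\<lambda>k. f y ((h \<circ> r) k))" if "y \<in> insert x S" for y
  proof (cases "y = x")
    case True
    then show ?thesis using r unfolding convergent_def by (auto simp: o_def)
  next
    case False
    then have "y \<in> S" using that by auto
    then obtain L where "(\<lambda>k. f y (h k)) \<longlonglongrightarrow> L" using h unfolding convergent_def by auto
    then have "((\<lambda>k. f y (h k)) \<circ> r) \<longlonglongrightarrow> L" using r LIMSEQ_subseq_LIMSEQ by blast
    then show ?thesis unfolding convergent_def by (auto simp: o_def)
  qed
  ultimately show ?case by blast
qed

lemma multi_bw:
  fixes f :: "'i \<Rightarrow> nat \<Rightarrow> complex"
  assumes fin: "finite S" and bd: "\<forall>x\<in>S. \<exists>B. \<forall>n. cmod (f x n) \<le> B"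
  shows "\<exists>h. strict_mono h \<and> (\<forall>x\<in>S. convergent (\<lambda>k. f x (h k)))"
proof -
  define g where "g p n = (if snd p then Re (f (fst p) n) else Im (f (fst p) n))" for p n
  have "\<forall>p\<in>S \<times> UNIV. \<exists>B. \<forall>n. norm (g p n) \<le> B"
  proof
    fix p assume "p \<in> S \<times> (UNIV :: bool set)"
    then obtain B where B: "\<forall>n. cmod (f (fst p) n) \<le> B" using bd by auto
    have "norm (g p n) \<le> B" for n
      using B[rule_format, of n] abs_Re_le_cmod[of "f (fst p) n"] abs_Im_le_cmod[of "f (fst p) n"]
      unfolding g_def by auto
    then show "\<exists>B. \<forall>n. norm (g p n) \<le> B" by blast
  qed
  from multi_bw_real[OF _ this] fin obtain h where h: "strict_mono h"
    "\<forall>p\<in>S \<times> UNIV. convergent (\<lambda>k. g p (h k))" by auto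
  have "convergent (\<lambda>k. f x (h k))" if x: "x \<in> S" for x
  proof -
    obtain a where a: "(\<lambda>k. g (x,True) (h k)) \<longlonglongrightarrow> a" using h(2) x unfolding convergent_def by blast
    obtain b where b: "(\<lambda>k. g (x,False) (h k)) \<longlonglongrightarrow> b" using h(2) x unfolding convergent_def by blast
    have "(\<lambda>k. f x (h k)) \<longlonglongrightarrow> Complex a b"
      unfolding tendsto_complex_iff using a b by (simp add: g_def)
    then show ?thesis unfolding convergent_def by blast
  qed
  then show ?thesis using h(1) by blast
qed

lemma lim_qf:
  assumes Y: "\<forall>k. Y k \<in> carrier_mat d d" and Z: "Z \<in> carrier_mat d d"
    and lim: "\<forall>i<d. \<forall>j<d. (\<lambda>k. Y k $$ (i,j)) \<longlonglongrightarrow> Z $$ (i,j)" and v: "v \<in> carrier_vec d"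
  shows "(\<lambda>k. qf d (Y k) v) \<longlonglongrightarrow> qf d Z v"
proof -
  have "(\<lambda>k. \<Sum>a<d. \<Sum>b<d. cnj (v $ a) * Y k $$ (a,b) * v $ b) \<longlonglongrightarrow> (\<Sum>a<d. \<Sum>b<d. cnj (v $ a) * Z $$ (a,b) * v $ b)"
    using lim by (intro tendsto_sum tendsto_mult tendsto_const) auto
  then show ?thesis using qf_expand_v[OF Y[rule_format] v] qf_expand_v[OF Z v] by simp
qed

lemma lim_state:
  assumes S: "\<forall>k. is_state d (Y k)" and Z: "Z \<in> carrier_mat d d"
    and lim: "\<forall>i<d. \<forall>j<d. (\<lambda>k. Y k $$ (i,j)) \<longlonglongrightarrow> Z $$ (i,j)"
  shows "is_state d Z"
proof -
  have Y: "\<forall>k. Y k \<in> carrier_mat d d" using S unfolding is_state_def psd_def by auto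
  have "psd d Z" unfolding psd_iff
  proof (rule conjI[OF Z], rule ballI)
    fix v :: "complex Matrix.vec" assume v: "v \<in> carrier_vec d"
    have q: "(\<lambda>k. qf d (Y k) v) \<longlonglongrightarrow> qf d Z v" by (rule lim_qf[OF Y Z lim v])
    have yk: "Im (qf d (Y k) v) = 0 \<and> Re (qf d (Y k) v) \<ge> 0" for k
      using S v unfolding is_state_def psd_iff by blast
    have "(\<lambda>k. Im (qf d (Y k) v)) \<longlonglongrightarrow> Im (qf d Z v)" using q by (rule tendsto_Im)
    moreover have "(\<lambda>k. Im (qf d (Y k) v)) \<longlonglongrightarrow> 0" using yk by simp
    ultimately have i0: "Im (qf d Z v) = 0" using LIMSEQ_unique by blast
    have "(\<lambda>k. Re (qf d (Y k) v)) \<longlonglongrightarrow> Re (qf d Z v)" using q by (rule tendsto_Re)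
    then have "Re (qf d Z v) \<ge> 0" using yk by (intro LIMSEQ_le_const) auto
    then show "Im (qf d Z v) = 0 \<and> Re (qf d Z v) \<ge> 0" using i0 by simp
  qed
  moreover have "mtrace Z = 1"
  proof -
    have t1: "(\<lambda>k. \<Sum>i<d. Y k $$ (i,i)) \<longlonglongrightarrow> (\<Sum>i<d. Z $$ (i,i))"
      using lim by (intro tendsto_sum) auto
    have "(\<Sum>i<d. Y k $$ (i,i)) = 1" for k using S[rule_format, of k] Y[rule_format, of k] unfolding is_state_def mtrace_def by simp
    then have t2: "(\<lambda>k. \<Sum>i<d. Y k $$ (i,i)) \<longlonglongrightarrow> 1" by simp
    have "(\<Sum>i<d. Z $$ (i,i)) = 1" by (rule LIMSEQ_unique[OF t1 t2])
    then show ?thesis using Z unfolding mtrace_def by simp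
  qed
  ultimately show ?thesis unfolding is_state_def by simp
qed

lemma idx_facts:
  fixes P d m :: nat assumes "P < d * m"
  shows "0 < m" "P div m < d" "P mod m < m"
proof -
  show m: "0 < m" using assms by (cases m) auto
  show "P div m < d" using assms by (simp add: less_mult_imp_div_less)
  show "P mod m < m" using m by simp
qed

lemma idx_back:
  fixes I a d m :: nat assumes "I < d" "a < m"
  shows "I * m + a < d * m" "(I * m + a) div m = I" "(I * m + a) mod m = a"
proof -
  have "I * m + a < (I + 1) * m" using assms by simp
  also have "\<dots> \<le> d * m" using assms by (intro mult_le_mono1) simp
  finally show "I * m + a < d * m" .
  show "(I * m + a) div m = I" "(I * m + a) mod m = a" using assms by auto
qed

lemma EB_transfer:
  assumes EB: "entanglement_breaking d \<psi>" and L: "linear_on_mat d \<chi>"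
    and S: "\<forall>A. is_state d A \<longrightarrow> is_state d (\<chi> A)"
    and eq: "\<forall>A\<in>carrier_mat d d. \<psi>' A = \<chi> (\<psi> A)"
    and c\<psi>: "\<forall>A\<in>carrier_mat d d. \<psi> A \<in> carrier_mat d d"
  shows "entanglement_breaking d \<psi>'"
  unfolding entanglement_breaking_def
proof (intro allI impI)
  fix m \<rho> assume st: "is_state (d*m) \<rho>"
  define \<sigma> where "\<sigma> = tensor_id d m \<psi> \<rho>"
  have "separable d m \<sigma>" using EB st unfolding entanglement_breaking_def \<sigma>_def by auto
  then obtain K :: nat and p A B where
    KA: "\<forall>k<K. p k \<ge> 0 \<and> is_state d (A k) \<and> is_state m (B k)" and
    ps: "(\<Sum>k<K. p k) = 1" and
    ent: "\<forall>i<d*m. \<forall>j<d*m. \<sigma> $$ (i,j) =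
            (\<Sum>k<K. complex_of_real (p k) * (A k $$ (i div m, j div m)) * (B k $$ (i mod m, j mod m)))"
    unfolding separable_def by (elim conjE exE) (rule that; assumption)
  have Acar: "\<forall>k\<in>{..<K}. A k \<in> carrier_mat d d" using KA unfolding is_state_def psd_def by auto
  have blkeq: "\<psi> (blk d m \<rho> a b) = mat d d (\<lambda>q. \<Sum>k\<in>{..<K}. (complex_of_real (p k) * B k $$ (a,b)) * A k $$ q)"
    if ab: "a < m" "b < m" for a b
  proof (rule eq_matI)
    fix I J assume "I < dim_row (mat d d (\<lambda>q. \<Sum>k\<in>{..<K}. (complex_of_real (p k) * B k $$ (a,b)) * A k $$ q))"
      "J < dim_col (mat d d (\<lambda>q. \<Sum>k\<in>{..<K}. (complex_of_real (p k) * B k $$ (a,b)) * A k $$ q))"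
    then have IJ: "I < d" "J < d" by auto
    have "\<sigma> $$ (I*m+a, J*m+b) = \<psi> (blk d m \<rho> a b) $$ (I,J)"
      unfolding \<sigma>_def tensor_id_def using idx_back[OF IJ(1) ab(1)] idx_back[OF IJ(2) ab(2)] by simp
    moreover have "\<sigma> $$ (I*m+a, J*m+b) = (\<Sum>k<K. complex_of_real (p k) * A k $$ (I,J) * B k $$ (a,b))"
      using ent idx_back[OF IJ(1) ab(1)] idx_back[OF IJ(2) ab(2)] by simp
    ultimately show "\<psi> (blk d m \<rho> a b) $$ (I,J) = mat d d (\<lambda>q. \<Sum>k\<in>{..<K}. (complex_of_real (p k) * B k $$ (a,b)) * A k $$ q) $$ (I,J)"
      using IJ by (simp add: algebra_simps)
  qed (use c\<psi>[rule_format, of "blk d m \<rho> a b"] in \<open>auto simp: blk_def\<close>)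
  show "separable d m (tensor_id d m \<psi>' \<rho>)"
    unfolding separable_def
  proof (intro conjI exI)
    show "tensor_id d m \<psi>' \<rho> \<in> carrier_mat (d*m) (d*m)" by (simp add: tensor_id_def)
    show "\<forall>k<K. p k \<ge> 0 \<and> is_state d (\<chi> (A k)) \<and> is_state m (B k)" using KA S by auto
    show "(\<Sum>k<K. p k) = 1" by (rule ps)
    show "\<forall>i<d*m. \<forall>j<d*m. tensor_id d m \<psi>' \<rho> $$ (i,j) =
            (\<Sum>k<K. complex_of_real (p k) * (\<chi> (A k) $$ (i div m, j div m)) * (B k $$ (i mod m, j mod m)))"
    proof (intro allI impI)
      fix i j assume ij: "i < d*m" "j < d*m"
      note fi = idx_facts[OF ij(1)] and fj = idx_facts[OF ij(2)]
      have bc: "blk d m \<rho> (i mod m) (j mod m) \<in> carrier_mat d d" by (simp add: blk_def)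
      have "tensor_id d m \<psi>' \<rho> $$ (i,j) = \<psi>' (blk d m \<rho> (i mod m) (j mod m)) $$ (i div m, j div m)"
        using ij by (simp add: tensor_id_def)
      also have "\<dots> = \<chi> (\<psi> (blk d m \<rho> (i mod m) (j mod m))) $$ (i div m, j div m)" using eq bc by simp
      also have "\<dots> = \<chi> (mat d d (\<lambda>q. \<Sum>k\<in>{..<K}. (complex_of_real (p k) * B k $$ (i mod m, j mod m)) * A k $$ q)) $$ (i div m, j div m)"
        using blkeq[OF fi(3) fj(3)] by simp
      also have "\<dots> = (\<Sum>k\<in>{..<K}. (complex_of_real (p k) * B k $$ (i mod m, j mod m)) * \<chi> (A k) $$ (i div m, j div m))"
        by (rule lin_sum[OF L _ Acar fi(2) fj(2)]) simp
      finally show "tensor_id d m \<psi>' \<rho> $$ (i,j) =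
            (\<Sum>k<K. complex_of_real (p k) * (\<chi> (A k) $$ (i div m, j div m)) * (B k $$ (i mod m, j mod m)))"
        by (simp add: algebra_simps)
    qed
  qed
qed

lemma key:
  assumes ch: "quantum_channel d \<phi>" and lp1: "limit_point_of_powers d \<phi> \<psi>"
    and lp2: "limit_point_of_powers d \<phi> \<psi>'"
  shows "\<exists>\<chi>. linear_on_mat d \<chi> \<and> (\<forall>A. is_state d A \<longrightarrow> is_state d (\<chi> A)) \<and>
             (\<forall>A\<in>carrier_mat d d. \<psi>' A = \<chi> (\<psi> A))"
proof -
  have L0: "linear_on_mat d \<phi>" and T0: "trace_preserving d \<phi>" using ch unfolding quantum_channel_def by auto
  have P0: "pos d \<phi>" by (rule channel_pos[OF ch])
  note pw = pow_props[OF L0 P0 T0]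
  have pwL: "linear_on_mat d (\<phi>^^n)" for n using pw by blast
  have pwP: "pos d (\<phi>^^n)" for n using pw by blast
  have pwT: "trace_preserving d (\<phi>^^n)" for n using pw by blast
  have pwC: "A \<in> carrier_mat d d \<Longrightarrow> (\<phi>^^n) A \<in> carrier_mat d d" for n A
    using pwL[of n] unfolding linear_on_mat_def by auto
  obtain r where r: "strict_mono r" and rl: "\<forall>A\<in>carrier_mat d d. \<forall>i<d. \<forall>j<d.
           (\<lambda>k. ((\<phi> ^^ r k) A) $$ (i,j)) \<longlonglongrightarrow> \<psi> A $$ (i,j)"
    using lp1 unfolding limit_point_of_powers_def by blast
  have c\<psi>: "\<forall>A\<in>carrier_mat d d. \<psi> A \<in> carrier_mat d d" using lp1 unfolding limit_point_of_powers_def by blast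
  obtain s where s: "strict_mono s" and sl: "\<forall>A\<in>carrier_mat d d. \<forall>i<d. \<forall>j<d.
           (\<lambda>k. ((\<phi> ^^ s k) A) $$ (i,j)) \<longlonglongrightarrow> \<psi>' A $$ (i,j)"
    using lp2 unfolding limit_point_of_powers_def by blast
  have c\<psi>': "\<forall>A\<in>carrier_mat d d. \<psi>' A \<in> carrier_mat d d" using lp2 unfolding limit_point_of_powers_def by blast
  define N where "N k = s (r k + k) - r k" for k
  have sN: "s (r k + k) = N k + r k" for k using seq_suble[OF s, of "r k + k"] unfolding N_def by simp
  define f where "f x n = (\<phi>^^N n) (E d (fst x) (fst (snd x))) $$ (fst (snd (snd x)), snd (snd (snd x)))"
    for x :: "nat \<times> nat \<times> nat \<times> nat" and n
  define S4 where "S4 = {..<d}\<times>{..<d}\<times>{..<d}\<times>{..<d}"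
  have bnd: "\<forall>x\<in>S4. \<exists>B. \<forall>n. cmod (f x n) \<le> B"
  proof
    fix x assume x: "x \<in> S4"
    obtain a b i j where xe: "x = (a,b,i,j)" by (cases x) auto
    have "a < d" "b < d" "i < d" "j < d" using x unfolding xe S4_def by auto
    then have "cmod (f x n) \<le> 8" for n unfolding xe f_def fst_conv snd_conv
      by (rule E_bound[OF pwL pwP pwT])
    then show "\<exists>B. \<forall>n. cmod (f x n) \<le> B" by blast
  qed
  obtain h where h: "strict_mono h" and hc: "\<forall>x\<in>S4. convergent (\<lambda>k. f x (h k))"
    using multi_bw[OF _ bnd] unfolding S4_def by auto
  define Lm where "Lm a b i j = lim (\<lambda>k. f (a,b,i,j) (h k))" for a b i j
  have Lconv: "(\<lambda>k. (\<phi>^^N (h k)) (E d a b) $$ (i,j)) \<longlonglongrightarrow> Lm a b i j"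
    if "a < d" "b < d" "i < d" "j < d" for a b i j
  proof -
    have "convergent (\<lambda>k. f (a,b,i,j) (h k))" using hc that unfolding S4_def by auto
    then have "(\<lambda>k. f (a,b,i,j) (h k)) \<longlonglongrightarrow> lim (\<lambda>k. f (a,b,i,j) (h k))"
      by (simp only: convergent_LIMSEQ_iff)
    then show ?thesis unfolding Lm_def by (simp add: f_def)
  qed
  define \<chi> where "\<chi> A = mat d d (\<lambda>q. \<Sum>x\<in>{..<d}\<times>{..<d}. A $$ x * Lm (fst x) (snd x) (fst q) (snd q))" for A
  have lin: "linear_on_mat d \<chi>"
    unfolding linear_on_mat_def
  proof (intro conjI ballI allI)
    fix A :: "complex mat" assume "A \<in> carrier_mat d d" show "\<chi> A \<in> carrier_mat d d" by (simp add: \<chi>_def)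
  next
    fix A B :: "complex mat" assume A: "A \<in> carrier_mat d d" and B: "B \<in> carrier_mat d d"
    show "\<chi> (A + B) = \<chi> A + \<chi> B"
    proof (rule eq_matI)
      fix i j assume "i < dim_row (\<chi> A + \<chi> B)" "j < dim_col (\<chi> A + \<chi> B)"
      then have ij: "i < d" "j < d" by (auto simp: \<chi>_def)
      have "(\<Sum>x\<in>{..<d}\<times>{..<d}. (A + B) $$ x * Lm (fst x) (snd x) i j)
          = (\<Sum>x\<in>{..<d}\<times>{..<d}. A $$ x * Lm (fst x) (snd x) i j + B $$ x * Lm (fst x) (snd x) i j)"
        using A B by (intro sum.cong) (auto simp: algebra_simps)
      then show "\<chi> (A + B) $$ (i,j) = (\<chi> A + \<chi> B) $$ (i,j)"
        using ij by (simp add: \<chi>_def sum.distrib)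
    qed (auto simp: \<chi>_def)
  next
    fix A :: "complex mat" and c :: complex assume A: "A \<in> carrier_mat d d"
    show "\<chi> (c \<cdot>\<^sub>m A) = c \<cdot>\<^sub>m \<chi> A"
    proof (rule eq_matI)
      fix i j assume "i < dim_row (c \<cdot>\<^sub>m \<chi> A)" "j < dim_col (c \<cdot>\<^sub>m \<chi> A)"
      then have ij: "i < d" "j < d" by (auto simp: \<chi>_def)
      have "(\<Sum>x\<in>{..<d}\<times>{..<d}. (c \<cdot>\<^sub>m A) $$ x * Lm (fst x) (snd x) i j)
          = (\<Sum>x\<in>{..<d}\<times>{..<d}. c * (A $$ x * Lm (fst x) (snd x) i j))"
        using A by (intro sum.cong) auto
      then show "\<chi> (c \<cdot>\<^sub>m A) $$ (i,j) = (c \<cdot>\<^sub>m \<chi> A) $$ (i,j)"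
        using ij by (simp add: \<chi>_def sum_distrib_left)
    qed (auto simp: \<chi>_def)
  qed
  have convx: "(\<lambda>k. (\<phi>^^N (h k)) A $$ (i,j)) \<longlonglongrightarrow> \<chi> A $$ (i,j)"
    if A: "A \<in> carrier_mat d d" and ij: "i < d" "j < d" for A i j
  proof -
    have "(\<lambda>k. \<Sum>x\<in>{..<d}\<times>{..<d}. A $$ x * (\<phi>^^N (h k)) (E d (fst x) (snd x)) $$ (i,j))
        \<longlonglongrightarrow> (\<Sum>x\<in>{..<d}\<times>{..<d}. A $$ x * Lm (fst x) (snd x) i j)"
      using ij by (intro tendsto_sum tendsto_mult_left Lconv) auto
    then show ?thesis using decomp[OF pwL A ij] ij by (simp add: \<chi>_def)
  qed
  have st: "is_state d (\<chi> A)" if A: "is_state d A" for A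
  proof (rule lim_state)
    have Ac: "A \<in> carrier_mat d d" using A unfolding is_state_def psd_def by auto
    show "\<forall>k. is_state d ((\<phi>^^N (h k)) A)"
      using A pwP pwT Ac unfolding is_state_def pos_def trace_preserving_def by auto
    show "\<chi> A \<in> carrier_mat d d" by (simp add: \<chi>_def)
    show "\<forall>i<d. \<forall>j<d. (\<lambda>k. (\<phi>^^N (h k)) A $$ (i,j)) \<longlonglongrightarrow> \<chi> A $$ (i,j)"
      using convx Ac by auto
  qed
  have rel: "\<psi>' A = \<chi> (\<psi> A)" if A: "A \<in> carrier_mat d d" for A
  proof (rule eq_matI)
    fix i j assume "i < dim_row (\<chi> (\<psi> A))" "j < dim_col (\<chi> (\<psi> A))"
    then have ij: "i < d" "j < d" by (auto simp: \<chi>_def)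
    define g where "g k = r (h k) + h k" for k
    have g: "strict_mono g" unfolding strict_mono_def g_def
      using r h by (auto simp: strict_mono_def intro: add_strict_mono)
    have lim1: "((\<lambda>n. (\<phi> ^^ s n) A $$ (i,j)) \<circ> g) \<longlonglongrightarrow> \<psi>' A $$ (i,j)"
      using sl A ij g by (intro LIMSEQ_subseq_LIMSEQ) auto
    have eqs: "((\<lambda>n. (\<phi> ^^ s n) A $$ (i,j)) \<circ> g) =
       (\<lambda>k. \<Sum>x\<in>{..<d}\<times>{..<d}. (\<phi>^^r (h k)) A $$ x * (\<phi>^^N (h k)) (E d (fst x) (snd x)) $$ (i,j))"
    proof
      fix k
      have "(\<phi> ^^ s (g k)) A = (\<phi>^^N (h k)) ((\<phi>^^r (h k)) A)"
        unfolding g_def sN funpow_add by simp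
      then show "((\<lambda>n. (\<phi> ^^ s n) A $$ (i,j)) \<circ> g) k =
         (\<Sum>x\<in>{..<d}\<times>{..<d}. (\<phi>^^r (h k)) A $$ x * (\<phi>^^N (h k)) (E d (fst x) (snd x)) $$ (i,j))"
        using decomp[OF pwL pwC[OF A] ij] by simp
    qed
    have lim2: "(\<lambda>k. \<Sum>x\<in>{..<d}\<times>{..<d}. (\<phi>^^r (h k)) A $$ x * (\<phi>^^N (h k)) (E d (fst x) (snd x)) $$ (i,j))
       \<longlonglongrightarrow> (\<Sum>x\<in>{..<d}\<times>{..<d}. \<psi> A $$ x * Lm (fst x) (snd x) i j)"
    proof (intro tendsto_sum tendsto_mult)
      fix x assume x: "x \<in> {..<d}\<times>{..<d}"
      show "(\<lambda>k. (\<phi>^^N (h k)) (E d (fst x) (snd x)) $$ (i,j)) \<longlonglongrightarrow> Lm (fst x) (snd x) i j"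
        using x ij by (intro Lconv) auto
      have "((\<lambda>k. (\<phi>^^r k) A $$ (fst x, snd x)) \<circ> h) \<longlonglongrightarrow> \<psi> A $$ (fst x, snd x)"
        using rl A x h by (intro LIMSEQ_subseq_LIMSEQ) auto
      then show "(\<lambda>k. (\<phi>^^r (h k)) A $$ x) \<longlonglongrightarrow> \<psi> A $$ x" by (simp add: o_def)
    qed
    have "\<psi>' A $$ (i,j) = (\<Sum>x\<in>{..<d}\<times>{..<d}. \<psi> A $$ x * Lm (fst x) (snd x) i j)"
      by (rule LIMSEQ_unique[OF lim1[unfolded eqs] lim2])
    then show "\<psi>' A $$ (i,j) = \<chi> (\<psi> A) $$ (i,j)" using ij by (simp add: \<chi>_def)
  qed (use c\<psi>' A in \<open>auto simp: \<chi>_def\<close>)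
  show ?thesis
  proof (intro exI[of _ \<chi>] conjI allI impI ballI)
    show "linear_on_mat d \<chi>" by (rule lin)
  next
    fix A :: "complex mat" assume "is_state d A" then show "is_state d (\<chi> A)" by (rule st)
  next
    fix A :: "complex mat" assume "A \<in> carrier_mat d d" then show "\<psi>' A = \<chi> (\<psi> A)" by (rule rel)
  qed
qed

theorem mainTheorem14:
  fixes d :: nat and \<phi> :: "complex mat \<Rightarrow> complex mat"
  assumes "0 < d" and "quantum_channel d \<phi>"
  shows "(\<forall>\<psi>. limit_point_of_powers d \<phi> \<psi> \<longrightarrow> entanglement_breaking d \<psi>) \<or>
         (\<forall>\<psi>. limit_point_of_powers d \<phi> \<psi> \<longrightarrow> \<not> entanglement_breaking d \<psi>)"
proof -
  { fix \<psi>1 \<psi>2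
    assume l1: "limit_point_of_powers d \<phi> \<psi>1" and l2: "limit_point_of_powers d \<phi> \<psi>2"
      and e2: "entanglement_breaking d \<psi>2"
    obtain \<chi> where \<chi>: "linear_on_mat d \<chi>" "\<forall>A. is_state d A \<longrightarrow> is_state d (\<chi> A)"
      "\<forall>A\<in>carrier_mat d d. \<psi>1 A = \<chi> (\<psi>2 A)"
      using key[OF assms(2) l2 l1] by blast
    have c: "\<forall>A\<in>carrier_mat d d. \<psi>2 A \<in> carrier_mat d d"
      using l2 unfolding limit_point_of_powers_def by (elim conjE)
    have "entanglement_breaking d \<psi>1" by (rule EB_transfer[OF e2 \<chi>(1) \<chi>(2) \<chi>(3) c])
  }
  note * = this
  show ?thesis
  proof (cases "\<exists>\<psi>2. limit_point_of_powers d \<phi> \<psi>2 \<and> entanglement_breaking d \<psi>2")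
    case True
    then obtain \<psi>2 where p2: "limit_point_of_powers d \<phi> \<psi>2" "entanglement_breaking d \<psi>2" by (elim exE conjE)
    have "\<forall>\<psi>. limit_point_of_powers d \<phi> \<psi> \<longrightarrow> entanglement_breaking d \<psi>"
    proof (intro allI impI)
      fix \<psi> assume "limit_point_of_powers d \<phi> \<psi>"
      then show "entanglement_breaking d \<psi>" by (rule *[OF _ p2])
    qed
    then show ?thesis by (rule disjI1)
  next
    case False
    then show ?thesis by blast
  qed
qed

end
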